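(* Let $x_1,\dots,x_r\in\mathbb R^s$, $c_1,\dots,c_r\in\{-1,1\}$, $\lambda>0$ and $\mu\in\mathbb R^r$ with $\mu>0$. Consider the primal problem $$\min_{\omega\in\mathbb R^s,\ \omega_0\in\mathbb R}\ \tfrac12\|\omega\|^2+\lambda\sum_{i=1}^r h\big(1-c_i(\langle\omega,x_i\rangle+\omega_0)\big),$$ where $h(t)=1$ if $t>0$ and $h(t)=0$ otherwise, and the dual problem $$\inf_{z\in\mathbb R^r}\ \tfrac12\Big\|\sum_{i=1}^r c_iz_ix_i\Big\|^2-\sum_{i=1}^r z_i+\sum_{i=1}^r\mu_i\mathbf 1_{\{z_i\neq0\}}\quad\text{s.t.}\quad \sum_{i=1}^r c_iz_i=0,\ z\ge0.$$ Then the primal problem always has a global minimizer, and the dual problem has a global minimizer if and only if there exist $\omega\in\mathbb R^s$, $\omega_0\in\mathbb R$ with $c_i(\langle\omega,x_i\rangle+\omega_0)\ge1$ for all $i\in[r]$.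
   Context: $\mathbf 1_{\{z_i\neq0\}}$ equals $1$ if $z_i\ne0$ and $0$ otherwise; $[r]=\{1,\dots,r\}$. *)

theory Defs
  imports "HOL-Analysis.Analysis"
begin

definition step01 :: "real \<Rightarrow> real" where
  "step01 t = (if t > 0 then 1 else 0)"

text \<open>Primal objective of the 0/1-loss SVM. Data points are indexed by a finite
  type 'r (so r = CARD('r)), and live in real^'s (so s = CARD('s)).\<close>
definition svm01_primal ::
  "('r::finite \<Rightarrow> real^'s) \<Rightarrow> ('r \<Rightarrow> real) \<Rightarrow> real \<Rightarrow> real^'s \<Rightarrow> real \<Rightarrow> real" where
  "svm01_primal x c lam w w0 =
     (1/2) * (norm w)^2 + lam * (\<Sum>i\<in>UNIV. step01 (1 - c i * (inner w (x i) + w0)))"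

definition svm01_dual ::
  "('r::finite \<Rightarrow> real^'s) \<Rightarrow> ('r \<Rightarrow> real) \<Rightarrow> real^'r \<Rightarrow> real^'r \<Rightarrow> real" where
  "svm01_dual x c mu z =
     (1/2) * (norm (\<Sum>i\<in>UNIV. (c i * z $ i) *\<^sub>R x i))^2
     - (\<Sum>i\<in>UNIV. z $ i)
     + (\<Sum>i\<in>UNIV. mu $ i * (if z $ i \<noteq> 0 then 1 else 0))"

definition svm01_dual_feasible :: "('r::finite \<Rightarrow> real) \<Rightarrow> real^'r \<Rightarrow> bool" where
  "svm01_dual_feasible c z \<longleftrightarrow> (\<Sum>i\<in>UNIV. c i * z $ i) = 0 \<and> (\<forall>i. z $ i \<ge> 0)"

end

theory Submission
  imports Defs
begin

lemma piecewise_min: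
  fixes F :: "'a::metric_space \<Rightarrow> real"
  assumes K: "compact K" "K \<noteq> {}" and fin: "finite I"
    and cl: "\<And>J. J \<in> I \<Longrightarrow> closed (C J)"
    and ct: "\<And>J. J \<in> I \<Longrightarrow> continuous_on UNIV (\<phi> J)"
    and up: "\<And>J p. J \<in> I \<Longrightarrow> p \<in> K \<Longrightarrow> p \<in> C J \<Longrightarrow> F p \<le> \<phi> J p"
    and lo: "\<And>p. p \<in> K \<Longrightarrow> \<exists>J\<in>I. p \<in> C J \<and> \<phi> J p \<le> F p"
  shows "\<exists>m\<in>K. \<forall>p\<in>K. F m \<le> F p"
proof -
  define I' where "I' = {J\<in>I. K \<inter> C J \<noteq> {}}"
  have "\<forall>J\<in>I'. \<exists>m\<in>K \<inter> C J. \<forall>q\<in>K \<inter> C J. \<phi> J m \<le> \<phi> J q"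
  proof
    fix J assume J: "J \<in> I'"
    show "\<exists>m\<in>K \<inter> C J. \<forall>q\<in>K \<inter> C J. \<phi> J m \<le> \<phi> J q"
      apply (rule continuous_attains_inf)
      using J K cl ct unfolding I'_def
      by (auto intro: compact_Int_closed continuous_on_subset)
  qed
  then obtain m where m: "\<And>J. J \<in> I' \<Longrightarrow> m J \<in> K \<inter> C J \<and> (\<forall>q\<in>K \<inter> C J. \<phi> J (m J) \<le> \<phi> J q)"
    by metis
  obtain p0 where "p0 \<in> K" using K by auto
  then obtain J1 where "J1 \<in> I" "p0 \<in> C J1" using lo by blast
  hence ne: "I' \<noteq> {}" using \<open>p0 \<in> K\<close> unfolding I'_def by blast
  have finI': "finite I'" using fin unfolding I'_def by auto
  define v where "v = Min ((\<lambda>J. \<phi> J (m J)) ` I')"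
  have "v \<in> (\<lambda>J. \<phi> J (m J)) ` I'" unfolding v_def using ne finI' by (intro Min_in) auto
  then obtain J0 where J0: "J0 \<in> I'" "v = \<phi> J0 (m J0)" by auto
  have vle: "\<And>J. J \<in> I' \<Longrightarrow> v \<le> \<phi> J (m J)" unfolding v_def using finI' by auto
  show ?thesis
  proof (intro bexI ballI)
    show "m J0 \<in> K" using m[OF J0(1)] by auto
    fix p assume p: "p \<in> K"
    then obtain J where J: "J \<in> I" "p \<in> C J" "\<phi> J p \<le> F p" using lo by blast
    hence JI: "J \<in> I'" using p unfolding I'_def by auto
    have "F (m J0) \<le> \<phi> J0 (m J0)" using m[OF J0(1)] J0(1) up unfolding I'_def by auto
    also have "\<dots> = v" using J0 by simp
    also have "\<dots> \<le> \<phi> J (m J)" using vle JI by auto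
    also have "\<dots> \<le> \<phi> J p" using m[OF JI] p J by auto
    also have "\<dots> \<le> F p" using J by auto
    finally show "F (m J0) \<le> F p" .
  qed
qed

lemma step01_le1: "step01 t \<le> 1" and step01_ge0: "0 \<le> step01 t"
  by (auto simp: step01_def)

lemma primal_ge: assumes "lam > 0"
  shows "(1/2) * (norm w)^2 \<le> svm01_primal x c lam w w0"
  unfolding svm01_primal_def using assms
  by (auto intro!: mult_nonneg_nonneg sum_nonneg simp: step01_ge0)

lemma primal_le: fixes x :: "'a::finite \<Rightarrow> real^'s" assumes "lam > 0"
  shows "svm01_primal x c lam w w0 \<le> (1/2) * (norm w)^2 + lam * real CARD('a)"
proof -
  have "(\<Sum>i\<in>UNIV. step01 (1 - c i * (inner w (x i) + w0))) \<le> (\<Sum>i\<in>(UNIV::'a set). 1)"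
    by (intro sum_mono) (simp add: step01_le1)
  thus ?thesis unfolding svm01_primal_def using assms by simp
qed

lemma primal_min:
  fixes x :: "'r::finite \<Rightarrow> real^'s"
  assumes c: "\<forall>i. c i = -1 \<or> c i = 1" and lam: "lam > 0"
  shows "\<exists>w w0. \<forall>w' w0'. svm01_primal x c lam w w0 \<le> svm01_primal x c lam w' w0'"
proof -
  define F where "F p = svm01_primal x c lam (fst p) (snd p)" for p
  define R where "R = sqrt (2 * lam * real CARD('r))"
  define S where "S = (\<Sum>i\<in>UNIV. norm (x i))"
  define M where "M = 1 + R * S"
  have R0: "R \<ge> 0" unfolding R_def using lam by simp
  have S0: "S \<ge> 0" unfolding S_def by (simp add: sum_nonneg)
  have M1: "M \<ge> 1" unfolding M_def using R0 S0 by simp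
  have R2: "R^2 = 2 * lam * real CARD('r)" unfolding R_def using lam by simp
  define K where "K = cball (0::real^'s) R \<times> {-M..M}"
  define C where "C J = (\<Inter>i\<in>J. {p::(real^'s) \<times> real. 1 \<le> c i * (inner (fst p) (x i) + snd p)})" for J
  define \<phi> where "\<phi> J p = (1/2) * (norm (fst p))^2 + lam * (\<Sum>i\<in>UNIV. if i \<in> J then 0 else 1)"
    for J :: "'r set" and p :: "(real^'s) \<times> real"
  have "\<exists>m\<in>K. \<forall>p\<in>K. F m \<le> F p"
  proof (rule piecewise_min[where I = "UNIV" and C = C and \<phi> = \<phi>])
    show "compact K" unfolding K_def by (intro compact_Times compact_cball compact_Icc)
    show "K \<noteq> {}" unfolding K_def using R0 M1 by auto
    show "finite (UNIV :: 'r set set)" by simp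
    fix J :: "'r set"
    show "closed (C J)" unfolding C_def
      by (intro closed_INT ballI closed_Collect_le continuous_intros)
    show "continuous_on UNIV (\<phi> J)" unfolding \<phi>_def by (intro continuous_intros)
    fix p assume "p \<in> K" "p \<in> C J"
    hence sat: "\<And>i. i \<in> J \<Longrightarrow> 1 \<le> c i * (inner (fst p) (x i) + snd p)" unfolding C_def by auto
    have "(\<Sum>i\<in>UNIV. step01 (1 - c i * (inner (fst p) (x i) + snd p))) \<le> (\<Sum>i\<in>UNIV. if i \<in> J then 0 else 1)"
      by (intro sum_mono) (auto simp: step01_def dest: sat)
    thus "F p \<le> \<phi> J p" unfolding F_def \<phi>_def svm01_primal_def using lam by simp
  next
    fix p assume "p \<in> K"
    define J where "J = {i. 1 \<le> c i * (inner (fst p) (x i) + snd p)}"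
    have "p \<in> C J" unfolding C_def J_def by auto
    moreover have "(\<Sum>i\<in>UNIV. step01 (1 - c i * (inner (fst p) (x i) + snd p))) = (\<Sum>i\<in>UNIV. if i \<in> J then 0 else 1)"
      by (intro sum.cong) (auto simp: step01_def J_def)
    hence "\<phi> J p \<le> F p" unfolding F_def \<phi>_def svm01_primal_def using lam by simp
    ultimately show "\<exists>J\<in>UNIV. p \<in> C J \<and> \<phi> J p \<le> F p" by blast
  qed
  then obtain m where mK: "m \<in> K" and mmin: "\<And>p. p \<in> K \<Longrightarrow> F m \<le> F p" by blast
  have "(0, 0) \<in> K" unfolding K_def using R0 M1 by auto
  hence Fm0: "F m \<le> lam * real CARD('r)"
    using mmin[of "(0,0)"] primal_le[OF lam, of x c 0 0] unfolding F_def by simp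
  show ?thesis
  proof (intro exI allI)
    fix w' w0'
    show "svm01_primal x c lam (fst m) (snd m) \<le> svm01_primal x c lam w' w0'"
    proof (cases "norm w' \<le> R")
      case False
      hence "R^2 < (norm w')^2" using R0 by (intro power_strict_mono) auto
      hence "lam * real CARD('r) < (1/2) * (norm w')^2" using R2 by simp
      thus ?thesis using Fm0 primal_ge[OF lam, of w' x c w0'] unfolding F_def by simp
    next
      case True
      define w0c where "w0c = max (-M) (min M w0')"
      have inK: "(w', w0c) \<in> K" unfolding K_def w0c_def using True M1 by auto
      have "(\<Sum>i\<in>UNIV. step01 (1 - c i * (inner w' (x i) + w0c))) \<le> (\<Sum>i\<in>UNIV. step01 (1 - c i * (inner w' (x i) + w0')))"
      proof (intro sum_mono)
        fix i
        have "\<bar>inner w' (x i)\<bar> \<le> norm w' * norm (x i)" by (rule Cauchy_Schwarz_ineq2)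
        also have "\<dots> \<le> R * S" using True S_def
          by (intro mult_mono) (auto simp: R0 intro!: member_le_sum)
        finally have b: "\<bar>inner w' (x i)\<bar> \<le> M - 1" unfolding M_def by simp
        show "step01 (1 - c i * (inner w' (x i) + w0c)) \<le> step01 (1 - c i * (inner w' (x i) + w0'))"
          using c[rule_format, of i] b unfolding step01_def w0c_def by (auto split: if_splits)
      qed
      hence "F (w', w0c) \<le> svm01_primal x c lam w' w0'" unfolding F_def svm01_primal_def
        using lam by simp
      thus ?thesis using mmin[OF inK] unfolding F_def by simp
    qed
  qed
qed

lemma scaleR_left_if_eq: "(if P then (1::real) else 0) *\<^sub>R (v::'a::real_vector) = (if P then v else 0)" by simp

lemma farkas_sep:
  fixes x :: "'r::finite \<Rightarrow> real^'s" and c :: "'r \<Rightarrow> real"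
  assumes nsep: "\<not> (\<exists>w w0. \<forall>i. c i * (inner w (x i) + w0) \<ge> 1)"
  shows "\<exists>y. (\<forall>i. 0 \<le> y i) \<and> sum y UNIV = 1 \<and> (\<Sum>i\<in>UNIV. c i * y i) = 0
            \<and> (\<Sum>i\<in>UNIV. (c i * y i) *\<^sub>R x i) = 0"
proof -
  define g where "g i = (((c i *\<^sub>R x i, c i), 1) :: ((real^'s) \<times> real) \<times> real)" for i
  define T where "T = {q. \<exists>y. (\<forall>i. 0 \<le> y i) \<and> sum y UNIV = 1 \<and> q = (\<Sum>i\<in>UNIV. y i *\<^sub>R g i)}"
  have GT: "range g \<subseteq> T"
  proof
    fix q assume "q \<in> range g"
    then obtain j where j: "q = g j" by auto
    show "q \<in> T" unfolding T_def
      by (rule CollectI, rule exI[of _ "\<lambda>i. if i = j then 1 else 0"]) (simp add: j sum.delta' cong: if_cong add: scaleR_left_if_eq)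
  qed
  have cT: "convex T"
  proof (rule convexI)
    fix q1 q2 and u v :: real
    assume q: "q1 \<in> T" "q2 \<in> T" and uv: "0 \<le> u" "0 \<le> v" "u + v = 1"
    obtain y1 where y1: "\<forall>i. 0 \<le> y1 i" "sum y1 UNIV = 1" "q1 = (\<Sum>i\<in>UNIV. y1 i *\<^sub>R g i)"
      using q(1) unfolding T_def by blast
    obtain y2 where y2: "\<forall>i. 0 \<le> y2 i" "sum y2 UNIV = 1" "q2 = (\<Sum>i\<in>UNIV. y2 i *\<^sub>R g i)"
      using q(2) unfolding T_def by blast
    show "u *\<^sub>R q1 + v *\<^sub>R q2 \<in> T" unfolding T_def
      apply (rule CollectI, rule exI[of _ "\<lambda>i. u * y1 i + v * y2 i"])
      using y1 y2 uv by (auto simp: sum.distrib sum_distrib_left[symmetric] scaleR_sum_right scaleR_add_left)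
  qed
  have hullT: "convex hull (range g) \<subseteq> T" using GT cT by (rule hull_minimal)
  have T1: "snd q = 1" if "q \<in> T" for q
    using that unfolding T_def g_def by (auto simp: snd_sum)
  define S where "S = convex hull (range g)"
  have "compact S" unfolding S_def by (intro compact_convex_hull finite_imp_compact) simp
  moreover have "0 \<notin> S" using hullT T1 unfolding S_def by fastforce
  ultimately have clC: "closed (conic hull S)" by (intro closed_conic_hull) simp
  have cvC: "convex (conic hull S)" unfolding S_def by (intro convex_conic_hull convex_convex_hull)
  define p where "p = (((0::real^'s), (0::real)), (1::real))"
  have "p \<in> conic hull S"
  proof (rule ccontr)
    assume "p \<notin> conic hull S"
    from separating_hyperplane_closed_point[OF cvC clC this]
    obtain a b where ab: "inner a p < b" "\<forall>q\<in>conic hull S. inner a q > b" by blast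
    obtain w w0 \<alpha> where a: "a = ((w, w0), \<alpha>)" by (metis prod.collapse)
    have gS: "g i \<in> S" for i unfolding S_def by (simp add: hull_inc)
    have "0 \<in> conic hull S" using gS by auto
    hence b0: "b < 0" using ab(2) by (metis inner_zero_right)
    have al: "\<alpha> < 0" using ab b0 a unfolding p_def by simp
    have ge: "inner a (g i) \<ge> 0" for i
    proof (rule ccontr)
      assume n: "\<not> inner a (g i) \<ge> 0"
      define t where "t = b / inner a (g i)"
      have t0: "t \<ge> 0" unfolding t_def using n b0 by (simp add: divide_nonpos_neg)
      have "t *\<^sub>R g i \<in> conic hull S" unfolding conic_hull_explicit using t0 gS by blast
      hence "inner a (t *\<^sub>R g i) > b" using ab by auto
      moreover have "inner a (t *\<^sub>R g i) = b" unfolding t_def using n by simp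
      ultimately show False by simp
    qed
    have "\<forall>i. c i * (inner ((1 / (-\<alpha>)) *\<^sub>R w) (x i) + w0 / (-\<alpha>)) \<ge> 1"
    proof
      fix i
      have "c i * (inner w (x i)) + w0 * c i + \<alpha> \<ge> 0" using ge[of i] unfolding a g_def by simp
      hence "c i * (inner w (x i) + w0) \<ge> -\<alpha>" by (simp add: algebra_simps)
      hence "c i * (inner w (x i) + w0) / (-\<alpha>) \<ge> 1" using al by (simp add: divide_le_eq)
      thus "c i * (inner ((1 / (-\<alpha>)) *\<^sub>R w) (x i) + w0 / (-\<alpha>)) \<ge> 1"
        by (simp add: algebra_simps add_divide_distrib)
    qed
    thus False using nsep by blast
  qed
  then obtain t q where tq: "p = t *\<^sub>R q" "0 \<le> t" "q \<in> S" unfolding conic_hull_explicit by blast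
  then obtain y where y: "\<forall>i. 0 \<le> y i" "sum y UNIV = 1" "q = (\<Sum>i\<in>UNIV. y i *\<^sub>R g i)"
    using hullT unfolding S_def T_def by blast
  have sq: "snd q = 1" using T1 hullT tq(3) unfolding S_def by blast
  have "snd p = t * snd q" using tq(1) by simp
  hence t1: "t = 1" using sq unfolding p_def by simp
  have "fst p = fst q" using tq(1) t1 by simp
  hence "(0::(real^'s) \<times> real) = (\<Sum>i\<in>UNIV. y i *\<^sub>R fst (g i))"
    using y(3) unfolding p_def by (simp add: fst_sum zero_prod_def)
  hence e: "(0::(real^'s) \<times> real) = (\<Sum>i\<in>UNIV. ((c i * y i) *\<^sub>R x i, c i * y i))"
    unfolding g_def by (simp add: mult.commute)
  have "(0::real^'s) = (\<Sum>i\<in>UNIV. (c i * y i) *\<^sub>R x i)"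
    using arg_cong[OF e, of fst] by (simp add: fst_sum)
  moreover have "(0::real) = (\<Sum>i\<in>UNIV. c i * y i)"
    using arg_cong[OF e, of snd] by (simp add: snd_sum)
  ultimately show ?thesis using y by auto
qed

lemma sumz_le:
  fixes x :: "'r::finite \<Rightarrow> real^'s"
  assumes f: "svm01_dual_feasible c z" and sep: "\<forall>i. c i * (inner w (x i) + w0) \<ge> 1"
  shows "(\<Sum>i\<in>UNIV. z $ i) \<le> inner w (\<Sum>i\<in>UNIV. (c i * z $ i) *\<^sub>R x i)"
proof -
  have z0: "\<And>i. 0 \<le> z $ i" and s0: "(\<Sum>i\<in>UNIV. c i * z $ i) = 0"
    using f unfolding svm01_dual_feasible_def by auto
  have "(\<Sum>i\<in>UNIV. z $ i) \<le> (\<Sum>i\<in>UNIV. z $ i * (c i * (inner w (x i) + w0)))"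
    by (intro sum_mono) (metis mult.right_neutral mult_left_mono sep z0)
  also have "\<dots> = (\<Sum>i\<in>UNIV. (c i * z $ i) * inner w (x i)) + w0 * (\<Sum>i\<in>UNIV. c i * z $ i)"
    by (simp add: sum_distrib_left sum.distrib algebra_simps)
  also have "\<dots> = inner w (\<Sum>i\<in>UNIV. (c i * z $ i) *\<^sub>R x i)"
    using s0 by (simp add: inner_sum_right)
  finally show ?thesis .
qed

lemma D_ge:
  assumes "\<forall>i. mu $ i > 0"
  shows "(1/2) * (norm (\<Sum>i\<in>UNIV. (c i * z $ i) *\<^sub>R x i))^2 - (\<Sum>i\<in>UNIV. z $ i) \<le> svm01_dual x c mu z"
proof -
  have "0 \<le> (\<Sum>i\<in>UNIV. mu $ i * (if z $ i \<noteq> 0 then 1 else 0))"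
    using assms by (intro sum_nonneg) (simp add: less_imp_le)
  thus ?thesis unfolding svm01_dual_def by simp
qed

lemma dual_min:
  fixes x :: "'r::finite \<Rightarrow> real^'s"
  assumes mu: "\<forall>i. mu $ i > 0" and sep: "\<forall>i. c i * (inner w (x i) + w0) \<ge> 1"
  shows "\<exists>z. svm01_dual_feasible c z \<and>
              (\<forall>z'. svm01_dual_feasible c z' \<longrightarrow> svm01_dual x c mu z \<le> svm01_dual x c mu z')"
proof -
  define F where "F = svm01_dual x c mu"
  define v where "v z = (\<Sum>i\<in>UNIV. (c i * z $ i) *\<^sub>R x i)" for z :: "real^'r"
  define B where "B = 2 * (norm w)^2"
  have B0: "B \<ge> 0" unfolding B_def by simp
  define K where "K = cbox 0 (\<chi> i. B) \<inter> {z::real^'r. (\<Sum>i\<in>UNIV. c i * z $ i) = 0}"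
  have Kf: "z \<in> K \<longleftrightarrow> svm01_dual_feasible c z \<and> (\<forall>i. z $ i \<le> B)" for z
    unfolding K_def svm01_dual_feasible_def by (auto simp: mem_box_cart)
  define C where "C J = (\<Inter>i\<in>-J. {z::real^'r. z $ i = 0})" for J :: "'r set"
  define \<phi> where "\<phi> J z = (1/2) * (norm (v z))^2 - (\<Sum>i\<in>UNIV. z $ i)
      + (\<Sum>i\<in>UNIV. mu $ i * (if i \<in> J then 1 else 0))" for J :: "'r set" and z
  have "\<exists>m\<in>K. \<forall>p\<in>K. F m \<le> F p"
  proof (rule piecewise_min[where I = "UNIV" and C = C and \<phi> = \<phi>])
    show "compact K" unfolding K_def
      by (intro compact_Int_closed compact_cbox closed_Collect_eq continuous_intros)
    show "K \<noteq> {}" using Kf[of 0] B0 unfolding svm01_dual_feasible_def by auto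
    show "finite (UNIV :: 'r set set)" by simp
    fix J :: "'r set"
    show "closed (C J)" unfolding C_def
      by (intro closed_INT ballI closed_Collect_eq continuous_intros)
    show "continuous_on UNIV (\<phi> J)" unfolding \<phi>_def v_def by (intro continuous_intros)
    fix p assume "p \<in> K" "p \<in> C J"
    hence sat: "\<And>i. i \<notin> J \<Longrightarrow> p $ i = 0" unfolding C_def by auto
    have "(\<Sum>i\<in>UNIV. mu $ i * (if p $ i \<noteq> 0 then 1 else 0)) \<le> (\<Sum>i\<in>UNIV. mu $ i * (if i \<in> J then 1 else 0))"
      using mu by (intro sum_mono) (use sat in \<open>force simp: less_imp_le\<close>)
    thus "F p \<le> \<phi> J p" unfolding F_def \<phi>_def svm01_dual_def v_def by simp
  next
    fix p assume "p \<in> K"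
    define J where "J = {i. p $ i \<noteq> 0}"
    have "p \<in> C J" unfolding C_def J_def by auto
    moreover have "\<phi> J p \<le> F p" unfolding F_def \<phi>_def svm01_dual_def v_def J_def by simp
    ultimately show "\<exists>J\<in>UNIV. p \<in> C J \<and> \<phi> J p \<le> F p" by blast
  qed
  then obtain m where mK: "m \<in> K" and mmin: "\<And>p. p \<in> K \<Longrightarrow> F m \<le> F p" by blast
  have "0 \<in> K" using Kf[of 0] B0 unfolding svm01_dual_feasible_def by auto
  hence Fm0: "F m \<le> 0" using mmin[of 0] unfolding F_def svm01_dual_def by simp
  show ?thesis
  proof (intro exI conjI allI impI)
    show "svm01_dual_feasible c m" using mK Kf by auto
    fix z' assume fz: "svm01_dual_feasible c z'"
    show "svm01_dual x c mu m \<le> svm01_dual x c mu z'"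
    proof (cases "\<forall>i. z' $ i \<le> B")
      case True
      thus ?thesis using mmin[of z'] Kf fz unfolding F_def by auto
    next
      case False
      then obtain j where j: "z' $ j > B" using not_le by blast
      have z0: "\<And>i. 0 \<le> z' $ i" using fz unfolding svm01_dual_feasible_def by auto
      have "z' $ j \<le> (\<Sum>i\<in>UNIV. z' $ i)" using z0 by (intro member_le_sum) auto
      hence sB: "(\<Sum>i\<in>UNIV. z' $ i) > B" using j by simp
      have le1: "(\<Sum>i\<in>UNIV. z' $ i) \<le> norm w * norm (v z')"
        using sumz_le[OF fz sep] norm_cauchy_schwarz[of w "v z'"] unfolding v_def by simp
      have "svm01_dual x c mu z' > 0"
      proof (rule ccontr)
        assume "\<not> svm01_dual x c mu z' > 0"
        hence "(1/2) * (norm (v z'))^2 \<le> (\<Sum>i\<in>UNIV. z' $ i)"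
          using D_ge[OF mu, of c z' x] unfolding v_def by simp
        hence h: "(norm (v z'))^2 \<le> 2 * norm w * norm (v z')" using le1 by simp
        have "norm (v z') \<le> 2 * norm w"
        proof (cases "norm (v z') = 0")
          case True thus ?thesis by simp
        next
          case False
          hence "norm (v z') > 0" by simp
          thus ?thesis using h by (simp add: power2_eq_square)
        qed
        hence "norm w * norm (v z') \<le> norm w * (2 * norm w)" by (intro mult_left_mono) auto
        hence "(\<Sum>i\<in>UNIV. z' $ i) \<le> B" using le1 unfolding B_def by (simp add: power2_eq_square)
        thus False using sB by simp
      qed
      thus ?thesis using Fm0 unfolding F_def by simp
    qed
  qed
qed


theorem mainTheorem8:
  fixes x :: "'r::finite \<Rightarrow> real^'s"
    and c :: "'r \<Rightarrow> real"
    and lam :: real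
    and mu :: "real^'r"
  assumes "\<forall>i. c i = -1 \<or> c i = 1"
    and "lam > 0"
    and "\<forall>i. mu $ i > 0"
  shows "(\<exists>w w0. \<forall>w' w0'. svm01_primal x c lam w w0 \<le> svm01_primal x c lam w' w0')
       \<and> ((\<exists>z. svm01_dual_feasible c z \<and>
              (\<forall>z'. svm01_dual_feasible c z' \<longrightarrow> svm01_dual x c mu z \<le> svm01_dual x c mu z'))
          \<longleftrightarrow> (\<exists>w w0. \<forall>i. c i * (inner w (x i) + w0) \<ge> 1))"
proof (intro conjI iffI)
  show "\<exists>w w0. \<forall>w' w0'. svm01_primal x c lam w w0 \<le> svm01_primal x c lam w' w0'"
    using primal_min[OF assms(1,2)] by blast
next
  assume "\<exists>w w0. \<forall>i. c i * (inner w (x i) + w0) \<ge> 1"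
  then obtain w w0 where "\<forall>i. c i * (inner w (x i) + w0) \<ge> 1" by blast
  from dual_min[OF assms(3) this] show "\<exists>z. svm01_dual_feasible c z \<and>
              (\<forall>z'. svm01_dual_feasible c z' \<longrightarrow> svm01_dual x c mu z \<le> svm01_dual x c mu z')" .
next
  assume "\<exists>z. svm01_dual_feasible c z \<and>
              (\<forall>z'. svm01_dual_feasible c z' \<longrightarrow> svm01_dual x c mu z \<le> svm01_dual x c mu z')"
  then obtain zs where zs: "svm01_dual_feasible c zs"
    and zmin: "\<And>z'. svm01_dual_feasible c z' \<Longrightarrow> svm01_dual x c mu zs \<le> svm01_dual x c mu z'" by blast
  show "\<exists>w w0. \<forall>i. c i * (inner w (x i) + w0) \<ge> 1"
  proof (rule ccontr)
    assume "\<not> (\<exists>w w0. \<forall>i. c i * (inner w (x i) + w0) \<ge> 1)"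
    from farkas_sep[OF this] obtain y where y: "\<forall>i. 0 \<le> y i" "sum y UNIV = 1"
      "(\<Sum>i\<in>UNIV. c i * y i) = 0" "(\<Sum>i\<in>UNIV. (c i * y i) *\<^sub>R x i) = 0" by blast
    define s where "s = \<bar>(\<Sum>i\<in>UNIV. mu $ i) - svm01_dual x c mu zs\<bar> + 1"
    have s0: "s > 0" unfolding s_def by simp
    define z where "z = (\<chi> i. s * y i)"
    have fz: "svm01_dual_feasible c z" unfolding svm01_dual_feasible_def z_def
      using y s0 by (simp add: sum_distrib_left[symmetric] algebra_simps)
    have v0: "(\<Sum>i\<in>UNIV. (c i * z $ i) *\<^sub>R x i) = 0"
    proof -
      have "(\<Sum>i\<in>UNIV. (c i * z $ i) *\<^sub>R x i) = s *\<^sub>R (\<Sum>i\<in>UNIV. (c i * y i) *\<^sub>R x i)"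
        unfolding z_def by (simp add: scaleR_sum_right algebra_simps)
      thus ?thesis using y(4) by simp
    qed
    have sz: "(\<Sum>i\<in>UNIV. z $ i) = s" unfolding z_def using y(2) by (simp add: sum_distrib_left[symmetric])
    have "(\<Sum>i\<in>UNIV. mu $ i * (if z $ i \<noteq> 0 then 1 else 0)) \<le> (\<Sum>i\<in>UNIV. mu $ i)"
      using assms(3) by (intro sum_mono) (simp add: less_imp_le)
    hence "svm01_dual x c mu z \<le> - s + (\<Sum>i\<in>UNIV. mu $ i)"
      unfolding svm01_dual_def using v0 sz by simp
    also have "\<dots> < svm01_dual x c mu zs" unfolding s_def by linarith
    finally show False using zmin[OF fz] by simp
  qed
qed

end
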